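(* Let $(\tilde\Theta^n_I)$ be a congruent family of covariant $n$-tensor fields on $\mathcal M_+(I)$, $I$ ranging over finite sets, and for a partition $\mathbf P$ of $\{1,\dots,n\}$, a finite set $I$ with $|I|\ge|\mathbf P|$ and $\lambda>0$ let $\theta^{\mathbf P}_{I,\lambda c_I}:=(\tilde\Theta^n_I)_{\lambda c_I}(\delta_{i_1},\dots,\delta_{i_n})$ for any multiindex $\vec i\in I^n$ with $\mathbf P(\vec i)=\mathbf P$ (this does not depend on the choice of $\vec i$). Suppose $\mathbf P_0$ is a partition of $\{1,\dots,n\}$ such that $\theta^{\mathbf P}_{I,\lambda c_I}=0$ for all partitions $\mathbf P<\mathbf P_0$, all $\lambda>0$ and all finite $I$ (for which it is defined). Then there is a continuous function $f_{\mathbf P_0}:(0,\infty)\to\mathbb R$ such that $\theta^{\mathbf P_0}_{I,\lambda c_I}=f_{\mathbf P_0}(\lambda)\,|I|^{n-|\mathbf P_0|}$ for all $\lambda>0$ and all finite sets $I$ with $|I|\ge|\mathbf P_0|$.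
   Context: For a finite set $I$: $\mathcal S(I)=\{\sum_{i\in I}x_i\delta_i:x_i\in\mathbb R\}$, $\mathcal M_+(I)=\{\sum\mu_i\delta_i:\mu_i>0\}$ (tangent space $\mathcal S(I)$), $c_I:=\frac1{|I|}\sum_{i\in I}\delta_i$. A covariant $n$-tensor field on $\mathcal M_+(I)$ is a continuously varying family of $n$-multilinear forms on $\mathcal S(I)$. A Markov kernel $K:I\to\mathcal P(I')$ between finite sets is a stochastic matrix $K(i)=\sum_{i'}K^i_{i'}\delta_{i'}$ with $K_*(\sum x_i\delta_i)=\sum_{i,i'}K^i_{i'}x_i\delta_{i'}$; it is congruent if there is a map $\kappa:I'\to I$ with $K^i_{i'}=0$ whenever $\kappa(i')\ne i$. The family is congruent if $(\tilde\Theta^n_{I'})_{K_*\mu}(K_*V_1,\dots,K_*V_n)=(\tilde\Theta^n_I)_\mu(V_1,\dots,V_n)$ for every congruent Markov kernel $K:I\to\mathcal P(I')$ between finite sets with $K_*(\mathcal M_+(I))\subset\mathcal M_+(I')$. For $\vec i\in I^n$, $\mathbf P(\vec i)$ is the partition of $\{1,\dots,n\}$ into classes of $k\sim l\iff i_k=i_l$. $|\mathbf P|$ is the number of blocks. Partitions are ordered by $\mathbf P\le\mathbf P'$ iff $\mathbf P$ is a subdivision (refinement) of $\mathbf P'$; $\mathbf P<\mathbf P'$ means $\mathbf P\le\mathbf P'$ and $\mathbf P\ne\mathbf P'$. *)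

theory Defs
  imports "HOL-Analysis.Analysis" "HOL-Library.Disjoint_Sets"
begin

text \<open>Finite sets I are modelled as finite nonempty subsets of nat.
  Measures / signed measures on I are functions nat \<Rightarrow> real vanishing outside I.
  Tensor arguments are lists of length n; argument positions are 0..<n.\<close>

definition SI :: "nat set \<Rightarrow> (nat \<Rightarrow> real) set" where
  "SI I = {x. \<forall>i. i \<notin> I \<longrightarrow> x i = 0}"

definition MP :: "nat set \<Rightarrow> (nat \<Rightarrow> real) set" where
  "MP I = {\<mu>. (\<forall>i\<in>I. \<mu> i > 0) \<and> (\<forall>i. i \<notin> I \<longrightarrow> \<mu> i = 0)}"

definition delta :: "nat \<Rightarrow> nat \<Rightarrow> real" where
  "delta i = (\<lambda>j. if j = i then 1 else 0)"

definition cI :: "nat set \<Rightarrow> nat \<Rightarrow> real" where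
  "cI I = (\<lambda>j. if j \<in> I then 1 / real (card I) else 0)"

definition tensor_field :: "nat \<Rightarrow> nat set \<Rightarrow> ((nat \<Rightarrow> real) \<Rightarrow> (nat \<Rightarrow> real) list \<Rightarrow> real) \<Rightarrow> bool" where
  "tensor_field n I T \<longleftrightarrow>
     (\<forall>\<mu>\<in>MP I. \<forall>Vs. length Vs = n \<and> set Vs \<subseteq> SI I \<longrightarrow>
        (\<forall>k<n. \<forall>x\<in>SI I. \<forall>y\<in>SI I. \<forall>a b::real.
           T \<mu> (Vs[k := (\<lambda>j. a * x j + b * y j)]) = a * T \<mu> (Vs[k := x]) + b * T \<mu> (Vs[k := y])))
   \<and> (\<forall>Vs. length Vs = n \<and> set Vs \<subseteq> SI I \<longrightarrow> continuous_on (MP I) (\<lambda>\<mu>. T \<mu> Vs))"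

definition congruent_markov :: "nat set \<Rightarrow> nat set \<Rightarrow> (nat \<Rightarrow> nat \<Rightarrow> real) \<Rightarrow> bool" where
  "congruent_markov I I' K \<longleftrightarrow>
     (\<forall>i\<in>I. \<forall>i'\<in>I'. K i i' \<ge> 0) \<and> (\<forall>i\<in>I. (\<Sum>i'\<in>I'. K i i') = 1) \<and>
     (\<exists>\<kappa>. \<kappa> ` I' \<subseteq> I \<and> (\<forall>i\<in>I. \<forall>i'\<in>I'. \<kappa> i' \<noteq> i \<longrightarrow> K i i' = 0))"

definition push :: "nat set \<Rightarrow> nat set \<Rightarrow> (nat \<Rightarrow> nat \<Rightarrow> real) \<Rightarrow> (nat \<Rightarrow> real) \<Rightarrow> nat \<Rightarrow> real" where
  "push I I' K x = (\<lambda>i'. if i' \<in> I' then (\<Sum>i\<in>I. K i i' * x i) else 0)"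

definition congruent_family :: "nat \<Rightarrow> (nat set \<Rightarrow> (nat \<Rightarrow> real) \<Rightarrow> (nat \<Rightarrow> real) list \<Rightarrow> real) \<Rightarrow> bool" where
  "congruent_family n \<Theta> \<longleftrightarrow>
     (\<forall>I. finite I \<and> I \<noteq> {} \<longrightarrow> tensor_field n I (\<Theta> I)) \<and>
     (\<forall>I I' K. finite I \<and> I \<noteq> {} \<and> finite I' \<and> I' \<noteq> {} \<and> congruent_markov I I' K \<and>
        push I I' K ` MP I \<subseteq> MP I' \<longrightarrow>
        (\<forall>\<mu>\<in>MP I. \<forall>Vs. length Vs = n \<and> set Vs \<subseteq> SI I \<longrightarrow>
           \<Theta> I' (push I I' K \<mu>) (map (push I I' K) Vs) = \<Theta> I \<mu> Vs))"

definition idx_partition :: "nat \<Rightarrow> nat list \<Rightarrow> nat set set" where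
  "idx_partition n is = (\<lambda>k. {l. l < n \<and> is ! l = is ! k}) ` {0..<n}"

definition refines :: "'a set set \<Rightarrow> 'a set set \<Rightarrow> bool" where
  "refines P P' \<longleftrightarrow> (\<forall>B\<in>P. \<exists>B'\<in>P'. B \<subseteq> B')"

definition theta :: "nat \<Rightarrow> (nat set \<Rightarrow> (nat \<Rightarrow> real) \<Rightarrow> (nat \<Rightarrow> real) list \<Rightarrow> real)
      \<Rightarrow> nat set set \<Rightarrow> nat set \<Rightarrow> real \<Rightarrow> real" where
  "theta n \<Theta> P I lam = \<Theta> I (\<lambda>j. lam * cI I j)
      (map delta (SOME is. length is = n \<and> set is \<subseteq> I \<and> idx_partition n is = P))"

end

theory Submission
  imports Defs
begin


lemma idx_part_iff:
  assumes "length is = n" "length js = n"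
  shows "idx_partition n is = idx_partition n js \<longleftrightarrow>
     (\<forall>a<n. \<forall>b<n. (is!a = is!b) = (js!a = js!b))"
proof
  assume eq: "idx_partition n is = idx_partition n js"
  show "\<forall>a<n. \<forall>b<n. (is!a = is!b) = (js!a = js!b)"
  proof (intro allI impI)
    fix a b assume a: "a < n" and b: "b < n"
    have "{l. l < n \<and> is ! l = is ! a} \<in> idx_partition n is"
      using a unfolding idx_partition_def by auto
    hence "{l. l < n \<and> is ! l = is ! a} \<in> idx_partition n js" using eq by simp
    then obtain c where c: "c < n" and ceq: "{l. l < n \<and> is ! l = is ! a} = {l. l < n \<and> js ! l = js ! c}"
      unfolding idx_partition_def by auto
    have "a \<in> {l. l < n \<and> js ! l = js ! c}" using ceq a by blast
    hence "js ! a = js ! c" by simp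
    hence S: "{l. l < n \<and> is ! l = is ! a} = {l. l < n \<and> js ! l = js ! a}" using ceq by simp
    have "b \<in> {l. l < n \<and> is ! l = is ! a} \<longleftrightarrow> b \<in> {l. l < n \<and> js ! l = js ! a}"
      by (simp only: S)
    thus "(is!a = is!b) = (js!a = js!b)" using b by auto
  qed
next
  assume H: "\<forall>a<n. \<forall>b<n. (is!a = is!b) = (js!a = js!b)"
  show "idx_partition n is = idx_partition n js"
    unfolding idx_partition_def
  proof (rule image_cong[OF refl])
    fix k assume "k \<in> {0..<n}"
    thus "{l. l < n \<and> is ! l = is ! k} = {l. l < n \<and> js ! l = js ! k}" using H by auto
  qed
qed

lemma idx_part_alt:
  assumes "length is = n"
  shows "idx_partition n is = (\<lambda>v. {l. l < n \<and> is ! l = v}) ` set is"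
proof -
  have "set is = (!) is ` {0..<n}"
    by (metis assms atLeastLessThan_upt list.set_map map_nth)
  thus ?thesis unfolding idx_partition_def by (simp add: image_image)
qed

lemma card_idx_part:
  assumes "length is = n"
  shows "card (idx_partition n is) = card (set is)"
proof -
  have "inj_on (\<lambda>v. {l. l < n \<and> is ! l = v}) (set is)"
  proof (rule inj_onI)
    fix x y assume x: "x \<in> set is" and "y \<in> set is" and e: "{l. l < n \<and> is ! l = x} = {l. l < n \<and> is ! l = y}"
    from x obtain l where "l < n" "is ! l = x" using assms by (auto simp: in_set_conv_nth)
    thus "x = y" using e by blast
  qed
  thus ?thesis using idx_part_alt[OF assms] by (simp add: card_image)
qed

lemma partition_idx_part:
  assumes "length is = n"
  shows "partition_on {0..<n} (idx_partition n is)"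
proof (rule partition_onI)
  show "\<Union> (idx_partition n is) = {0..<n}" unfolding idx_partition_def by auto
next
  fix p q assume "p \<in> idx_partition n is" "q \<in> idx_partition n is" "p \<noteq> q"
  thus "disjnt p q" unfolding idx_partition_def disjnt_def by auto
next
  show "{} \<notin> idx_partition n is" unfolding idx_partition_def by auto
qed

lemma refines_idx_part:
  assumes "length is = n" "length js = n" "\<forall>l<n. \<kappa> (js!l) = is!l"
  shows "refines (idx_partition n js) (idx_partition n is)"
  unfolding refines_def
proof
  fix B assume "B \<in> idx_partition n js"
  then obtain k where k: "k < n" and B: "B = {l. l < n \<and> js ! l = js ! k}"
    unfolding idx_partition_def by auto
  have "{l. l < n \<and> is ! l = is ! k} \<in> idx_partition n is"
    unfolding idx_partition_def using k by auto
  moreover have "B \<subseteq> {l. l < n \<and> is ! l = is ! k}"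
  proof
    fix l assume "l \<in> B"
    hence l: "l < n" "js ! l = js ! k" using B by auto
    have "is ! l = \<kappa> (js ! l)" using assms(3) l(1) by simp
    also have "\<dots> = is ! k" using assms(3) k l(2) by simp
    finally show "l \<in> {l. l < n \<and> is ! l = is ! k}" using l by simp
  qed
  ultimately show "\<exists>B'\<in>idx_partition n is. B \<subseteq> B'" by blast
qed

lemma card_part_le:
  assumes "partition_on {0..<(n::nat)} P" shows "finite P"
proof -
  have "P \<subseteq> Pow {0..<n}" using partition_onD1[OF assms] by auto
  thus ?thesis by (rule finite_subset) simp
qed

lemma exists_idx:
  assumes P: "partition_on {0..<n} P" and I: "finite I" and c: "card P \<le> card I"
  shows "\<exists>is. length is = n \<and> set is \<subseteq> I \<and> idx_partition n is = P"
proof -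
  have fP: "finite P" using card_part_le[OF P] .
  obtain e where e: "e ` P \<subseteq> I" "inj_on e P" using card_le_inj[OF fP I c] by blast
  define blk where "blk l = (THE B. B \<in> P \<and> l \<in> B)" for l
  have blk: "blk l \<in> P \<and> l \<in> blk l" if "l < n" for l
  proof -
    have "\<exists>!B. B \<in> P \<and> l \<in> B"
      using P that unfolding partition_on_def disjoint_def by auto
    thus ?thesis unfolding blk_def by (rule theI')
  qed
  have blkeq: "blk l = B" if "l < n" "B \<in> P" "l \<in> B" for l B
  proof -
    have "\<exists>!B. B \<in> P \<and> l \<in> B"
      using P that unfolding partition_on_def disjoint_def by auto
    thus ?thesis using blk[OF that(1)] that by blast
  qed
  define ixs where "ixs = map (\<lambda>l. e (blk l)) [0..<n]"
  have len: "length ixs = n" unfolding ixs_def by simp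
  have "set ixs \<subseteq> I" unfolding ixs_def using e blk by auto
  moreover have "idx_partition n ixs = P"
  proof -
    have "idx_partition n ixs = (\<lambda>k. {l. l < n \<and> blk l = blk k}) ` {0..<n}"
      unfolding idx_partition_def ixs_def
      apply (rule image_cong[OF refl])
      using e(2) blk by (auto simp: inj_on_eq_iff)
    also have "\<dots> = blk ` {0..<n}"
    proof (rule image_cong[OF refl])
      fix k assume "k \<in> {0..<n}"
      hence k: "k < n" by simp
      have sub: "blk k \<subseteq> {0..<n}" using blk[OF k] partition_onD1[OF P] by auto
      show "{l. l < n \<and> blk l = blk k} = blk k"
      proof
        show "{l. l < n \<and> blk l = blk k} \<subseteq> blk k" using blk by auto
        show "blk k \<subseteq> {l. l < n \<and> blk l = blk k}"
          using sub blkeq blk[OF k] by auto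
      qed
    qed
    also have "\<dots> = P"
    proof
      show "blk ` {0..<n} \<subseteq> P" using blk by auto
      show "P \<subseteq> blk ` {0..<n}"
      proof
        fix B assume B: "B \<in> P"
        then obtain l where "l \<in> B" using P unfolding partition_on_def by (metis ex_in_conv)
        moreover have "l < n" using B \<open>l \<in> B\<close> P unfolding partition_on_def by auto
        ultimately show "B \<in> blk ` {0..<n}" using blkeq B by force
      qed
    qed
    finally show ?thesis .
  qed
  ultimately show ?thesis using len by blast
qed



lemma SI_sum: "(\<And>j. j \<in> F \<Longrightarrow> g j \<in> SI I) \<Longrightarrow> (\<lambda>x. \<Sum>j\<in>F. c * g j x) \<in> SI I"
  unfolding SI_def by auto

lemma delta_SI: "i \<in> I \<Longrightarrow> delta i \<in> SI I"
  unfolding SI_def delta_def by auto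

lemma zero_SI: "(\<lambda>_. 0) \<in> SI I"
  unfolding SI_def by auto

lemma slot_sum:
  assumes T: "tensor_field n I T" and \<mu>: "\<mu> \<in> MP I" and Vs: "length Vs = n" "set Vs \<subseteq> SI I"
    and k: "k < n" and F: "finite F" and g: "\<And>j. j \<in> F \<Longrightarrow> g j \<in> SI I"
  shows "T \<mu> (Vs[k := (\<lambda>x. \<Sum>j\<in>F. c * g j x)]) = (\<Sum>j\<in>F. c * T \<mu> (Vs[k := g j]))"
  using F g
proof (induction F rule: finite_induct)
  case empty
  have lin: "\<forall>x\<in>SI I. \<forall>y\<in>SI I. \<forall>a b::real.
           T \<mu> (Vs[k := (\<lambda>j. a * x j + b * y j)]) = a * T \<mu> (Vs[k := x]) + b * T \<mu> (Vs[k := y])"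
    using T \<mu> Vs k unfolding tensor_field_def by blast
  have "T \<mu> (Vs[k := (\<lambda>j. 0 * (0::real) + 0 * 0)]) = 0 * T \<mu> (Vs[k := (\<lambda>_. 0)]) + 0 * T \<mu> (Vs[k := (\<lambda>_. 0)])"
    using lin zero_SI by fastforce
  thus ?case by simp
next
  case (insert a F)
  have lin: "\<forall>x\<in>SI I. \<forall>y\<in>SI I. \<forall>a b::real.
           T \<mu> (Vs[k := (\<lambda>j. a * x j + b * y j)]) = a * T \<mu> (Vs[k := x]) + b * T \<mu> (Vs[k := y])"
    using T \<mu> Vs k unfolding tensor_field_def by blast
  have ga: "g a \<in> SI I" using insert by simp
  have gF: "(\<lambda>x. \<Sum>j\<in>F. c * g j x) \<in> SI I" using insert by (intro SI_sum) simp
  note L = lin[rule_format, OF ga gF, of c 1]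
  moreover have "(\<lambda>x. \<Sum>j\<in>insert a F. c * g j x) = (\<lambda>j. c * g a j + 1 * (\<Sum>j'\<in>F. c * g j' j))"
    using insert by simp
  ultimately show ?case using insert by simp
qed

definition LS :: "nat set list \<Rightarrow> nat list set" where
  "LS Fs = {js. length js = length Fs \<and> (\<forall>l<length Fs. js!l \<in> Fs!l)}"

lemma LS_Nil: "LS [] = {[]}" unfolding LS_def by auto

lemma LS_Cons: "LS (F # Fs) = (\<lambda>(j,js). j # js) ` (F \<times> LS Fs)"
proof
  show "LS (F # Fs) \<subseteq> (\<lambda>(j,js). j # js) ` (F \<times> LS Fs)"
  proof
    fix xs assume xs: "xs \<in> LS (F # Fs)"
    then obtain j js where "xs = j # js" unfolding LS_def by (cases xs) auto
    moreover have "j \<in> F" "js \<in> LS Fs" using xs \<open>xs = j # js\<close> unfolding LS_def by force+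
    ultimately show "xs \<in> (\<lambda>(j,js). j # js) ` (F \<times> LS Fs)" by force
  qed
  show "(\<lambda>(j,js). j # js) ` (F \<times> LS Fs) \<subseteq> LS (F # Fs)"
    unfolding LS_def by (auto simp: nth_Cons split: nat.splits)
qed

lemma expand:
  assumes T: "tensor_field n I T" and \<mu>: "\<mu> \<in> MP I"
  shows "\<forall>F\<in>set Fs. F \<subseteq> I \<and> finite F \<Longrightarrow> set pre \<subseteq> SI I \<Longrightarrow> length pre + length Fs = n \<Longrightarrow>
    T \<mu> (pre @ map (\<lambda>F x. \<Sum>j\<in>F. c * delta j x) Fs) = c ^ length Fs * (\<Sum>js\<in>LS Fs. T \<mu> (pre @ map delta js))"
proof (induction Fs arbitrary: pre)
  case Nil
  thus ?case by (simp add: LS_Nil)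
next
  case (Cons F Fs)
  define S where "S = (\<lambda>F x. \<Sum>j\<in>F. c * delta j x)"
  have SSI: "S G \<in> SI I" if "G \<subseteq> I" for G unfolding S_def using that by (intro SI_sum delta_SI) auto
  define Vs where "Vs = pre @ (\<lambda>_. 0) # map S Fs"
  have Vs: "length Vs = n" "set Vs \<subseteq> SI I" using Cons.prems SSI zero_SI unfolding Vs_def by auto
  have upd: "Vs[length pre := G] = pre @ G # map S Fs" for G unfolding Vs_def by simp
  have "T \<mu> (pre @ map S (F # Fs)) = T \<mu> (Vs[length pre := S F])" by (simp add: upd)
  also have "\<dots> = (\<Sum>j\<in>F. c * T \<mu> (Vs[length pre := delta j]))"
    unfolding S_def
    by (rule slot_sum[OF T \<mu> Vs]) (use Cons.prems in \<open>auto intro: delta_SI\<close>)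
  also have "\<dots> = (\<Sum>j\<in>F. c * T \<mu> ((pre @ [delta j]) @ map S Fs))" by (simp add: upd)
  also have "\<dots> = (\<Sum>j\<in>F. c * (c ^ length Fs * (\<Sum>js\<in>LS Fs. T \<mu> ((pre @ [delta j]) @ map delta js))))"
  proof (rule sum.cong[OF refl])
    fix j assume j: "j \<in> F"
    have "T \<mu> ((pre @ [delta j]) @ map S Fs) = c ^ length Fs * (\<Sum>js\<in>LS Fs. T \<mu> ((pre @ [delta j]) @ map delta js))"
      unfolding S_def using Cons.prems j by (intro Cons.IH) (auto intro: delta_SI)
    thus "c * T \<mu> ((pre @ [delta j]) @ map S Fs) = c * (c ^ length Fs * (\<Sum>js\<in>LS Fs. T \<mu> ((pre @ [delta j]) @ map delta js)))"
      by simp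
  qed
  also have "\<dots> = c ^ length (F # Fs) * (\<Sum>j\<in>F. \<Sum>js\<in>LS Fs. T \<mu> (pre @ map delta (j # js)))"
    by (simp add: sum_distrib_left mult.assoc)
  also have "(\<Sum>j\<in>F. \<Sum>js\<in>LS Fs. T \<mu> (pre @ map delta (j # js))) = (\<Sum>xs\<in>LS (F # Fs). T \<mu> (pre @ map delta xs))"
  proof -
    have "(\<Sum>j\<in>F. \<Sum>js\<in>LS Fs. T \<mu> (pre @ map delta (j # js))) = (\<Sum>(j,js)\<in>F \<times> LS Fs. T \<mu> (pre @ map delta (j # js)))"
      by (rule sum.cartesian_product)
    also have "\<dots> = (\<Sum>xs\<in>(\<lambda>(j,js). j # js) ` (F \<times> LS Fs). T \<mu> (pre @ map delta xs))"
      by (subst sum.reindex) (auto simp: inj_on_def case_prod_beta)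
    finally show ?thesis by (simp add: LS_Cons)
  qed
  finally show ?case unfolding S_def .
qed



lemma cI_MP: "finite I \<Longrightarrow> I \<noteq> {} \<Longrightarrow> (lam::real) > 0 \<Longrightarrow> (\<lambda>j. lam * cI I j) \<in> MP I"
  unfolding MP_def cI_def by (auto simp: card_gt_0_iff)

lemma kernel:
  assumes cf: "congruent_family n \<Theta>"
    and I: "finite I" "I \<noteq> {}" and J: "finite J" "J \<noteq> {}"
    and \<kappa>: "\<kappa> ` J \<subseteq> I" and k: "k > 0"
    and fib: "\<And>i. i \<in> I \<Longrightarrow> card {j\<in>J. \<kappa> j = i} = k"
    and lam: "lam > 0" and len: "length is = n" and sis: "set is \<subseteq> I"
  shows "\<Theta> I (\<lambda>j. lam * cI I j) (map delta is)
     = (1 / real k) ^ n * (\<Sum>js\<in>LS (map (\<lambda>i. {j\<in>J. \<kappa> j = i}) is). \<Theta> J (\<lambda>j. lam * cI J j) (map delta js))"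
proof -
  define K where "K i j = (if \<kappa> j = i then 1 / real k else 0)" for i j
  define fb where "fb i = {j\<in>J. \<kappa> j = i}" for i
  have pv: "push I J K x j = x (\<kappa> j) / real k" if "j \<in> J" for x j
  proof -
    have "push I J K x j = (\<Sum>i\<in>I. if i = \<kappa> j then x i / real k else 0)"
      unfolding push_def K_def using that by (auto intro!: sum.cong)
    also have "\<dots> = x (\<kappa> j) / real k" using I \<kappa> that by (subst sum.delta) auto
    finally show ?thesis .
  qed
  have pout: "push I J K x j = 0" if "j \<notin> J" for x j unfolding push_def using that by simp
  have rows: "(\<Sum>j\<in>J. K i j) = 1" if "i \<in> I" for i
  proof -
    have "(\<Sum>j\<in>{j\<in>J. \<kappa> j = i}. 1 / real k) = (\<Sum>j\<in>J. if \<kappa> j = i then 1 / real k else 0)"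
      by (rule sum.inter_filter[OF J(1)])
    hence "(\<Sum>j\<in>J. K i j) = (\<Sum>j\<in>{j\<in>J. \<kappa> j = i}. 1 / real k)"
      unfolding K_def by simp
    also have "\<dots> = 1" using fib[OF that] k by simp
    finally show ?thesis .
  qed
  have cm: "congruent_markov I J K"
    unfolding congruent_markov_def using rows \<kappa> by (auto simp: K_def intro!: exI[of _ \<kappa>])
  have cardJ: "card J = k * card I"
  proof -
    have Jeq: "J = (\<Union>i\<in>I. fb i)" using \<kappa> unfolding fb_def by auto
    have "card (\<Union>i\<in>I. fb i) = (\<Sum>i\<in>I. card (fb i))"
      by (rule card_UN_disjoint) (use I(1) J(1) in \<open>auto simp: fb_def\<close>)
    hence "card J = (\<Sum>i\<in>I. card (fb i))" using Jeq by simp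
    also have "\<dots> = (\<Sum>i\<in>I. k)" using fib fb_def by simp
    finally show ?thesis by simp
  qed
  have pMP: "push I J K ` MP I \<subseteq> MP J"
  proof
    fix y assume "y \<in> push I J K ` MP I"
    then obtain x where x: "x \<in> MP I" and y: "y = push I J K x" by blast
    show "y \<in> MP J" unfolding MP_def
    proof (intro CollectI conjI allI ballI impI)
      fix j assume j: "j \<in> J"
      hence "\<kappa> j \<in> I" using \<kappa> by auto
      hence "x (\<kappa> j) > 0" using x unfolding MP_def by auto
      thus "y j > 0" using pv[OF j] k y by simp
    next
      fix j assume "j \<notin> J" thus "y j = 0" using pout y by simp
    qed
  qed
  have pc: "push I J K (\<lambda>j. lam * cI I j) = (\<lambda>j. lam * cI J j)"
  proof
    fix j show "push I J K (\<lambda>j. lam * cI I j) j = lam * cI J j"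
    proof (cases "j \<in> J")
      case True thus ?thesis using \<kappa> by (auto simp: pv cI_def cardJ)
    next
      case False thus ?thesis by (simp add: pout cI_def)
    qed
  qed
  define S where "S = (\<lambda>F x. \<Sum>j\<in>F. (1 / real k) * delta j x)"
  have pd: "push I J K (delta i) = S (fb i)" if "i \<in> I" for i
  proof
    fix x show "push I J K (delta i) x = S (fb i) x"
    proof (cases "x \<in> J")
      case True
      have "S (fb i) x = (\<Sum>j\<in>fb i. if x = j then 1 / real k else 0)"
        unfolding S_def delta_def by (intro sum.cong) auto
      also have "\<dots> = (if x \<in> fb i then 1 / real k else 0)"
        using J by (subst sum.delta') (auto simp: fb_def)
      finally have "S (fb i) x = (if x \<in> fb i then 1 / real k else 0)" .
      thus ?thesis using True by (simp add: pv delta_def fb_def)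
    next
      case False
      have "S (fb i) x = 0" unfolding S_def delta_def using False by (auto simp: fb_def intro!: sum.neutral)
      thus ?thesis using False by (simp add: pout)
    qed
  qed
  have C0: "\<forall>I I' K. finite I \<and> I \<noteq> {} \<and> finite I' \<and> I' \<noteq> {} \<and> congruent_markov I I' K \<and>
        push I I' K ` MP I \<subseteq> MP I' \<longrightarrow>
        (\<forall>\<mu>\<in>MP I. \<forall>Vs. length Vs = n \<and> set Vs \<subseteq> SI I \<longrightarrow>
           \<Theta> I' (push I I' K \<mu>) (map (push I I' K) Vs) = \<Theta> I \<mu> Vs)"
    using cf unfolding congruent_family_def by (rule conjunct2)
  note C1 = C0[rule_format]
  have tfJ: "tensor_field n J (\<Theta> J)" using cf J unfolding congruent_family_def by blast
  have mu: "(\<lambda>j. lam * cI I j) \<in> MP I" using cI_MP I lam by blast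
  have Vs: "length (map delta is) = n" "set (map delta is) \<subseteq> SI I" using len sis delta_SI by auto
  have "\<Theta> I (\<lambda>j. lam * cI I j) (map delta is) = \<Theta> J (push I J K (\<lambda>j. lam * cI I j)) (map (push I J K) (map delta is))"
    apply (rule C1[symmetric])
    using I J cm pMP mu Vs by auto
  also have "map (push I J K) (map delta is) = [] @ map S (map fb is)"
    using sis pd by auto
  also have "\<Theta> J (push I J K (\<lambda>j. lam * cI I j)) ([] @ map S (map fb is))
      = (1 / real k) ^ length (map fb is) * (\<Sum>js\<in>LS (map fb is). \<Theta> J (\<lambda>j. lam * cI J j) ([] @ map delta js))"
    unfolding pc S_def
    apply (rule expand[OF tfJ])
    using J len sis by (auto simp: cI_MP lam fb_def)
  moreover have fbeq: "fb = (\<lambda>i. {j\<in>J. \<kappa> j = i})" by (rule ext) (simp add: fb_def)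
  ultimately show ?thesis using len by simp
qed



lemma bij_ext:
  assumes I: "finite I" and J: "finite J" and c: "card I = card J"
    and len: "length is = n" "length js = n" and s: "set is \<subseteq> I" "set js \<subseteq> J"
    and p: "idx_partition n is = idx_partition n js"
  shows "\<exists>\<kappa>. bij_betw \<kappa> J I \<and> (\<forall>l<n. \<kappa> (js!l) = is!l)"
proof -
  have eqv: "\<forall>a<n. \<forall>b<n. (is!a = is!b) = (js!a = js!b)" using idx_part_iff[OF len] p by blast
  define A where "A = set js"
  define B where "B = set is"
  define h where "h a = is ! (SOME l. l < n \<and> js ! l = a)" for a
  have hl: "h (js!l) = is!l" if "l < n" for l
  proof -
    have "\<exists>l'. l' < n \<and> js ! l' = js ! l" using that by blast
    hence "(SOME l'. l' < n \<and> js ! l' = js ! l) < n \<and> js ! (SOME l'. l' < n \<and> js ! l' = js ! l) = js ! l"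
      by (rule someI_ex)
    hence "is ! (SOME l'. l' < n \<and> js ! l' = js ! l) = is ! l" using eqv that by simp
    thus ?thesis unfolding h_def .
  qed
  have Aeq: "A = (!) js ` {0..<n}" unfolding A_def
    by (metis len(2) atLeastLessThan_upt list.set_map map_nth)
  have Beq: "B = (!) is ` {0..<n}" unfolding B_def
    by (metis len(1) atLeastLessThan_upt list.set_map map_nth)
  have bh: "bij_betw h A B"
    unfolding bij_betw_def
  proof
    show "inj_on h A"
    proof (rule inj_onI)
      fix x y assume "x \<in> A" "y \<in> A" "h x = h y"
      then obtain a b where "a < n" "b < n" "x = js!a" "y = js!b" "h x = h y" unfolding Aeq by auto
      then have "is!a = is!b" using hl by metis
    thus "x = y" using eqv \<open>a < n\<close> \<open>b < n\<close> \<open>x = js!a\<close> \<open>y = js!b\<close> by simp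
    qed
    have "h ` A = (\<lambda>l. h (js!l)) ` {0..<n}" unfolding Aeq by (simp add: image_image)
    also have "\<dots> = B" unfolding Beq using hl by (intro image_cong) auto
    finally show "h ` A = B" .
  qed
  have fA: "finite A" "finite B" unfolding A_def B_def by auto
  have "card A = card B" using bh bij_betw_same_card by blast
  moreover have "A \<subseteq> J" "B \<subseteq> I" using s A_def B_def by auto
  ultimately have "card (J - A) = card (I - B)" using c I J fA by (simp add: card_Diff_subset)
  then obtain g where g: "bij_betw g (J - A) (I - B)"
    using finite_same_card_bij I J by (meson finite_Diff)
  define \<kappa> where "\<kappa> x = (if x \<in> A then h x else g x)" for x
  have "bij_betw \<kappa> (A \<union> (J - A)) (B \<union> (I - B))"
  proof (rule bij_betw_combine)
    show "bij_betw \<kappa> A B" using bh by (rule bij_betw_cong[THEN iffD1, rotated]) (simp add: \<kappa>_def)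
    show "bij_betw \<kappa> (J - A) (I - B)" using g by (rule bij_betw_cong[THEN iffD1, rotated]) (simp add: \<kappa>_def)
  qed auto
  moreover have "A \<union> (J - A) = J" "B \<union> (I - B) = I" using \<open>A \<subseteq> J\<close> \<open>B \<subseteq> I\<close> by auto
  ultimately have "bij_betw \<kappa> J I" by simp
  moreover have "\<forall>l<n. \<kappa> (js!l) = is!l" using hl unfolding \<kappa>_def Aeq by auto
  ultimately show ?thesis by blast
qed

lemma W_eq:
  assumes cf: "congruent_family n \<Theta>"
    and I: "finite I" "I \<noteq> {}" and J: "finite J" "J \<noteq> {}" and c: "card I = card J"
    and lam: "lam > 0"
    and len: "length is = n" "length js = n" and s: "set is \<subseteq> I" "set js \<subseteq> J"
    and p: "idx_partition n is = idx_partition n js"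
  shows "\<Theta> I (\<lambda>j. lam * cI I j) (map delta is) = \<Theta> J (\<lambda>j. lam * cI J j) (map delta js)"
proof -
  obtain \<kappa> where b: "bij_betw \<kappa> J I" and kl: "\<forall>l<n. \<kappa> (js!l) = is!l"
    using bij_ext[OF I(1) J(1) c len s p] by blast
  have inj: "inj_on \<kappa> J" and img: "\<kappa> ` J = I" using b by (auto simp: bij_betw_def)
  have fibs: "card {j\<in>J. \<kappa> j = i} = 1" if "i \<in> I" for i
  proof -
    from img that obtain x where x: "x \<in> J" "i = \<kappa> x" by blast
    hence "{j\<in>J. \<kappa> j = i} = {x}" using inj by (auto simp: inj_on_def)
    thus ?thesis by simp
  qed
  have fibl: "{j\<in>J. \<kappa> j = is!l} = {js!l}" if "l < n" for l
  proof -
    have "js!l \<in> J" using s len that by auto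
    thus ?thesis using inj kl that by (auto simp: inj_on_def)
  qed
  have LSeq: "LS (map (\<lambda>i. {j\<in>J. \<kappa> j = i}) is) = {js}"
  proof (rule set_eqI)
    fix xs
    show "xs \<in> LS (map (\<lambda>i. {j\<in>J. \<kappa> j = i}) is) \<longleftrightarrow> xs \<in> {js}"
    proof
      assume "xs \<in> LS (map (\<lambda>i. {j\<in>J. \<kappa> j = i}) is)"
      hence xl: "length xs = n" and xe: "\<forall>l<n. xs!l \<in> {j\<in>J. \<kappa> j = is!l}"
        unfolding LS_def using len by auto
      have "xs = js"
      proof (rule nth_equalityI)
        show "length xs = length js" using xl len by simp
        fix l assume "l < length xs"
        thus "xs ! l = js ! l" using xe fibl xl by blast
      qed
      thus "xs \<in> {js}" by simp
    next
      assume "xs \<in> {js}"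
      thus "xs \<in> LS (map (\<lambda>i. {j\<in>J. \<kappa> j = i}) is)"
        unfolding LS_def using len fibl by auto
    qed
  qed
  have "\<Theta> I (\<lambda>j. lam * cI I j) (map delta is)
     = (1 / real 1) ^ n * (\<Sum>js\<in>LS (map (\<lambda>i. {j\<in>J. \<kappa> j = i}) is). \<Theta> J (\<lambda>j. lam * cI J j) (map delta js))"
    by (rule kernel[OF cf I J]) (use img fibs lam len s in auto)
  thus ?thesis by (simp add: LSeq)
qed

lemma theta_eq:
  assumes cf: "congruent_family n \<Theta>"
    and I: "finite I" "I \<noteq> {}" and lam: "lam > 0"
    and len: "length is = n" and s: "set is \<subseteq> I" and p: "idx_partition n is = P"
  shows "theta n \<Theta> P I lam = \<Theta> I (\<lambda>j. lam * cI I j) (map delta is)"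
proof -
  define js where "js = (SOME is. length is = n \<and> set is \<subseteq> I \<and> idx_partition n is = P)"
  have ex: "\<exists>xs. length xs = n \<and> set xs \<subseteq> I \<and> idx_partition n xs = P"
    using len s p by blast
  have J: "length js = n \<and> set js \<subseteq> I \<and> idx_partition n js = P"
    unfolding js_def by (rule someI_ex[OF ex])
  have "\<Theta> I (\<lambda>j. lam * cI I j) (map delta js) = \<Theta> I (\<lambda>j. lam * cI I j) (map delta is)"
    apply (rule W_eq[OF cf I I refl lam])
    using J len s p by auto
  thus ?thesis unfolding theta_def js_def .
qed



lemma div_fiber:
  assumes "(k::nat) > 0" "v < c"
  shows "card {j \<in> {0..<c*k}. j div k = v} = k"
proof -
  have "{j \<in> {0..<c*k}. j div k = v} = {v * k ..< v * k + k}"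
  proof (rule set_eqI)
    fix j
    have "(j div k = v) = (v * k \<le> j \<and> j < v * k + k)"
      using assms by (metis add.commute div_nat_eqI dividend_less_times_div mult.commute
    mult_Suc times_div_less_eq_dividend)
    moreover have "v * k + k \<le> c * k" using assms
      by (metis Suc_leI add.commute mult_Suc mult_le_mono1)
    ultimately show "j \<in> {j \<in> {0..<c*k}. j div k = v} \<longleftrightarrow> j \<in> {v * k ..< v * k + k}" by auto
  qed
  thus ?thesis by simp
qed

lemma count_LS:
  assumes len: "length is = n"
    and F: "\<And>v. v \<in> set is \<Longrightarrow> finite (F v) \<and> card (F v) = k"
    and dis: "\<And>v w. v \<in> set is \<Longrightarrow> w \<in> set is \<Longrightarrow> v \<noteq> w \<Longrightarrow> F v \<inter> F w = {}"
  shows "card {js \<in> LS (map F is). idx_partition n js = idx_partition n is} = k ^ card (set is)"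
proof -
  let ?E = "PiE (set is) F"
  let ?g = "\<lambda>c. map c is"
  have img: "?g ` ?E = {js \<in> LS (map F is). idx_partition n js = idx_partition n is}"
  proof
    show "?g ` ?E \<subseteq> {js \<in> LS (map F is). idx_partition n js = idx_partition n is}"
    proof
      fix js assume "js \<in> ?g ` ?E"
      then obtain c where c: "c \<in> ?E" and js: "js = map c is" by blast
      have cF: "c v \<in> F v" if "v \<in> set is" for v using c that by (auto simp: PiE_def Pi_def)
      have "js \<in> LS (map F is)" unfolding LS_def js using cF by auto
      moreover have "idx_partition n js = idx_partition n is"
      proof -
        have "\<forall>a<n. \<forall>b<n. (js!a = js!b) = (is!a = is!b)"
        proof (intro allI impI)
          fix a b assume a: "a < n" and b: "b < n"
          have ia: "is!a \<in> set is" and ib: "is!b \<in> set is" using a b len by auto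
          show "(js!a = js!b) = (is!a = is!b)"
          proof
            assume "js!a = js!b"
            hence "c (is!a) = c (is!b)" using a b len js by simp
            hence "c (is!a) \<in> F (is!a) \<inter> F (is!b)" using cF ia ib by (metis IntI)
            thus "is!a = is!b" using dis ia ib by blast
          next
            assume "is!a = is!b" thus "js!a = js!b" using a b len js by simp
          qed
        qed
        thus ?thesis using idx_part_iff[of js n "is"] len js by simp
      qed
      ultimately show "js \<in> {js \<in> LS (map F is). idx_partition n js = idx_partition n is}" by blast
    qed
  next
    show "{js \<in> LS (map F is). idx_partition n js = idx_partition n is} \<subseteq> ?g ` ?E"
    proof
      fix js assume "js \<in> {js \<in> LS (map F is). idx_partition n js = idx_partition n is}"
      hence jl: "length js = n" and jF: "\<forall>l<n. js!l \<in> F (is!l)" and p: "idx_partition n js = idx_partition n is"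
        unfolding LS_def using len by auto
      have eqv: "\<forall>a<n. \<forall>b<n. (js!a = js!b) = (is!a = is!b)" using idx_part_iff[OF jl len] p by blast
      define sel where "sel v = (SOME l. l < n \<and> is!l = v)" for v
      have sel: "sel v < n \<and> is!(sel v) = v" if "v \<in> set is" for v
      proof -
        have "\<exists>l. l < n \<and> is!l = v" using that len by (auto simp: in_set_conv_nth)
        thus ?thesis unfolding sel_def by (rule someI_ex)
      qed
      define c where "c v = (if v \<in> set is then js!(sel v) else undefined)" for v
      have "c \<in> ?E"
      proof (rule PiE_I)
        fix v assume v: "v \<in> set is"
        thus "c v \<in> F v" unfolding c_def using sel[OF v] jF by metis
      next
        fix v assume "v \<notin> set is" thus "c v = undefined" unfolding c_def by simp
      qed
      moreover have "js = map c is"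
      proof (rule nth_equalityI)
        show "length js = length (map c is)" using jl len by simp
        fix l assume "l < length js"
        hence l: "l < n" using jl by simp
        have v: "is!l \<in> set is" using l len by simp
        have "c (is!l) = js!(sel (is!l))" unfolding c_def using v by simp
        also have "\<dots> = js!l" using eqv sel[OF v] l by blast
        finally show "js ! l = map c is ! l" using l len by simp
      qed
      ultimately show "js \<in> ?g ` ?E" by blast
    qed
  qed
  have inj: "inj_on ?g ?E"
  proof (rule inj_onI)
    fix c c' assume c: "c \<in> ?E" and c': "c' \<in> ?E" and e: "map c is = map c' is"
    show "c = c'"
    proof (rule PiE_ext[OF c c'])
      fix v assume "v \<in> set is"
      thus "c v = c' v" using e by (metis map_eq_conv)
    qed
  qed
  have "card {js \<in> LS (map F is). idx_partition n js = idx_partition n is} = card ?E"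
    using img inj card_image by metis
  also have "\<dots> = (\<Prod>v\<in>set is. card (F v))" by (rule card_PiE) simp
  also have "\<dots> = (\<Prod>v\<in>set is. k)" using F by simp
  finally show ?thesis by simp
qed



lemma indep:
  assumes cf: "congruent_family n \<Theta>" and P0: "partition_on {0..<n} P0"
    and I: "finite I" "I \<noteq> {}" and cP: "card P0 \<le> card I" and lam: "lam > 0"
  shows "theta n \<Theta> P0 I lam = theta n \<Theta> P0 {0..<card I} lam"
proof -
  obtain ixs where i: "length ixs = n" "set ixs \<subseteq> I" "idx_partition n ixs = P0"
    using exists_idx[OF P0 I(1) cP] by blast
  have I2: "finite {0..<card I}" "{0..<card I} \<noteq> {}" using I by auto
  obtain js where j: "length js = n" "set js \<subseteq> {0..<card I}" "idx_partition n js = P0"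
    using exists_idx[OF P0 I2(1)] cP by auto
  have "theta n \<Theta> P0 I lam = \<Theta> I (\<lambda>j. lam * cI I j) (map delta ixs)"
    by (rule theta_eq[OF cf I lam i])
  also have "\<dots> = \<Theta> {0..<card I} (\<lambda>j. lam * cI {0..<card I} j) (map delta js)"
    by (rule W_eq[OF cf I I2 _ lam i(1) j(1) i(2) j(2)]) (use i j in auto)
  also have "\<dots> = theta n \<Theta> P0 {0..<card I} lam"
    by (rule theta_eq[OF cf I2 lam j, symmetric])
  finally show ?thesis .
qed

lemma scale:
  assumes cf: "congruent_family n \<Theta>" and P0: "partition_on {0..<n} P0"
    and H: "\<forall>P. partition_on {0..<n} P \<and> refines P P0 \<and> P \<noteq> P0 \<longrightarrow>
           (\<forall>lam>0. \<forall>I. finite I \<and> I \<noteq> {} \<and> card I \<ge> card P \<longrightarrow> theta n \<Theta> P I lam = 0)"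
    and c: "card P0 \<le> c" "1 \<le> c" and k: "1 \<le> k" and lam: "lam > 0"
  shows "theta n \<Theta> P0 {0..<c*k} lam = real k ^ (n - card P0) * theta n \<Theta> P0 {0..<c} lam"
proof -
  define I where "I = {0..<c}"
  define J where "J = {0..<c*k}"
  have I: "finite I" "I \<noteq> {}" using c unfolding I_def by auto
  have J: "finite J" "J \<noteq> {}" using c k unfolding J_def by auto
  obtain ixs where i: "length ixs = n" "set ixs \<subseteq> I" "idx_partition n ixs = P0"
    using exists_idx[OF P0 I(1)] c unfolding I_def by auto
  have dn: "card P0 \<le> n" using card_idx_part[OF i(1)] i card_length by metis
  define fb where "fb v = {j\<in>J. j div k = v}" for v
  have fbeq: "(\<lambda>v. {j\<in>J. j div k = v}) = fb" unfolding fb_def by simp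
  have cfb: "card (fb v) = k" if "v \<in> I" for v
    unfolding fb_def J_def using div_fiber[of k v c] that k unfolding I_def by auto
  have kk: "(\<lambda>j. j div k) ` J \<subseteq> I"
    unfolding I_def J_def using k by (auto simp: less_mult_imp_div_less)
  have KER: "\<Theta> I (\<lambda>j. lam * cI I j) (map delta ixs)
     = (1 / real k) ^ n * (\<Sum>js\<in>LS (map fb ixs). \<Theta> J (\<lambda>j. lam * cI J j) (map delta js))"
    using kernel[OF cf I J kk _ _ lam i(1) i(2)] k cfb unfolding fb_def by auto
  define T where "T = theta n \<Theta> P0 J lam"
  have tm: "\<Theta> J (\<lambda>j. lam * cI J j) (map delta js) = (if idx_partition n js = P0 then T else 0)"
    if js: "js \<in> LS (map fb ixs)" for js
  proof -
    have jl: "length js = n" and jF: "\<forall>l<n. js!l \<in> fb (ixs!l)" using js i(1) unfolding LS_def by auto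
    have sj: "set js \<subseteq> J" using jF jl unfolding fb_def by (auto simp: in_set_conv_nth)
    have jk: "\<forall>l<n. js!l div k = ixs!l" using jF unfolding fb_def by auto
    have te: "theta n \<Theta> (idx_partition n js) J lam = \<Theta> J (\<lambda>j. lam * cI J j) (map delta js)"
      by (rule theta_eq[OF cf J lam jl sj refl])
    show ?thesis
    proof (cases "idx_partition n js = P0")
      case True thus ?thesis using te unfolding T_def by simp
    next
      case False
      have pp: "partition_on {0..<n} (idx_partition n js)" by (rule partition_idx_part[OF jl])
      have rf: "refines (idx_partition n js) P0"
        using refines_idx_part[OF i(1) jl jk] i(3) by simp
      have cc: "card (idx_partition n js) \<le> card J"
        using card_idx_part[OF jl] card_mono[OF J(1) sj] by simp
      have "theta n \<Theta> (idx_partition n js) J lam = 0"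
        using H pp rf False lam J cc by blast
      thus ?thesis using te False by simp
    qed
  qed
  have finLS: "finite (LS (map fb ixs))"
  proof (rule finite_subset)
    show "LS (map fb ixs) \<subseteq> {xs. set xs \<subseteq> J \<and> length xs = n}"
      unfolding LS_def fb_def using i(1) by (auto simp: in_set_conv_nth)
    show "finite {xs. set xs \<subseteq> J \<and> length xs = n}" by (rule finite_lists_length_eq[OF J(1)])
  qed
  have "(\<Sum>js\<in>LS (map fb ixs). \<Theta> J (\<lambda>j. lam * cI J j) (map delta js))
      = (\<Sum>js\<in>LS (map fb ixs). if idx_partition n js = P0 then T else 0)"
    using tm by (rule sum.cong[OF refl])
  also have "\<dots> = (\<Sum>js\<in>{js \<in> LS (map fb ixs). idx_partition n js = P0}. T)"
    by (rule sum.inter_filter[OF finLS, symmetric])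
  also have "\<dots> = real (card {js \<in> LS (map fb ixs). idx_partition n js = idx_partition n ixs}) * T"
    using i(3) by simp
  also have "card {js \<in> LS (map fb ixs). idx_partition n js = idx_partition n ixs} = k ^ card (set ixs)"
  proof (rule count_LS[OF i(1)])
    fix v assume "v \<in> set ixs"
    hence "v \<in> I" using i(2) by auto
    thus "finite (fb v) \<and> card (fb v) = k" using cfb J(1) unfolding fb_def by auto
  next
    fix v w :: nat assume "v \<noteq> w" thus "fb v \<inter> fb w = {}" unfolding fb_def by auto
  qed
  also have "card (set ixs) = card P0" using card_idx_part[OF i(1)] i(3) by simp
  finally have S: "(\<Sum>js\<in>LS (map fb ixs). \<Theta> J (\<lambda>j. lam * cI J j) (map delta js)) = real k ^ card P0 * T"
    by simp
  have "theta n \<Theta> P0 I lam = \<Theta> I (\<lambda>j. lam * cI I j) (map delta ixs)"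
    by (rule theta_eq[OF cf I lam i])
  also have "\<dots> = (1 / real k) ^ n * (real k ^ card P0 * T)" using KER S by simp
  finally have E: "theta n \<Theta> P0 I lam = (1 / real k) ^ n * (real k ^ card P0 * T)" .
  have nk: "real k ^ n = real k ^ (n - card P0) * real k ^ card P0"
    using dn by (simp add: power_add[symmetric])
  have kp: "real k ^ card P0 > 0" using k by simp
  have "real k ^ (n - card P0) * theta n \<Theta> P0 I lam = real k ^ (n - card P0) * real k ^ card P0 * T / real k ^ n"
    unfolding E by (simp add: power_divide)
  also have "\<dots> = T" using nk k by simp
  finally show ?thesis unfolding T_def I_def J_def by simp
qed



theorem lemma4p6:
  fixes n :: nat and \<Theta> :: "nat set \<Rightarrow> (nat \<Rightarrow> real) \<Rightarrow> (nat \<Rightarrow> real) list \<Rightarrow> real"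
    and P0 :: "nat set set"
  assumes "congruent_family n \<Theta>"
    and "partition_on {0..<n} P0"
    and "\<forall>P. partition_on {0..<n} P \<and> refines P P0 \<and> P \<noteq> P0 \<longrightarrow>
           (\<forall>lam>0. \<forall>I. finite I \<and> I \<noteq> {} \<and> card I \<ge> card P \<longrightarrow> theta n \<Theta> P I lam = 0)"
  shows "\<exists>f. continuous_on {0<..} f \<and>
           (\<forall>lam>0. \<forall>I. finite I \<and> I \<noteq> {} \<and> card I \<ge> card P0 \<longrightarrow>
              theta n \<Theta> P0 I lam = f lam * real (card I) ^ (n - card P0))"
proof -
  note cf = assms(1) and P0 = assms(2) and H = assms(3)
  define d where "d = card P0"
  define e where "e = n - d"
  define m0 where "m0 = max d 1"
  define I0 where "I0 = {0..<m0}"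
  have m0: "d \<le> m0" "1 \<le> m0" unfolding m0_def by auto
  have I0: "finite I0" "I0 \<noteq> {}" "card I0 = m0" using m0 unfolding I0_def by auto
  define G where "G c lam = theta n \<Theta> P0 {0..<c} lam" for c lam
  define f where "f lam = G m0 lam / real m0 ^ e" for lam
  have cont: "continuous_on {0<..} f"
  proof -
    define Vs where "Vs = map delta (SOME is. length is = n \<and> set is \<subseteq> I0 \<and> idx_partition n is = P0)"
    have ex: "\<exists>xs. length xs = n \<and> set xs \<subseteq> I0 \<and> idx_partition n xs = P0"
      using exists_idx[OF P0 I0(1)] I0(3) m0 unfolding d_def by auto
    have sx: "length (SOME is. length is = n \<and> set is \<subseteq> I0 \<and> idx_partition n is = P0) = n \<and>
        set (SOME is. length is = n \<and> set is \<subseteq> I0 \<and> idx_partition n is = P0) \<subseteq> I0 \<and>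
        idx_partition n (SOME is. length is = n \<and> set is \<subseteq> I0 \<and> idx_partition n is = P0) = P0"
      by (rule someI_ex[OF ex])
    have Vs: "length Vs = n \<and> set Vs \<subseteq> SI I0" unfolding Vs_def using sx delta_SI by auto
    have tf: "tensor_field n I0 (\<Theta> I0)" using cf I0 unfolding congruent_family_def by blast
    have c1: "continuous_on (MP I0) (\<lambda>\<mu>. \<Theta> I0 \<mu> Vs)" using tf Vs unfolding tensor_field_def by blast
    have c2: "continuous_on {0<..} (\<lambda>lam::real. (\<lambda>j. lam * cI I0 j))"
      by (intro continuous_on_coordinatewise_then_product continuous_intros)
    have im: "(\<lambda>lam::real. (\<lambda>j. lam * cI I0 j)) ` {0<..} \<subseteq> MP I0" using cI_MP I0 by auto
    have c3: "continuous_on {0<..} (\<lambda>lam. \<Theta> I0 (\<lambda>j. lam * cI I0 j) Vs)"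
      by (rule continuous_on_compose2[OF c1 c2 im])
    have feq: "f = (\<lambda>lam. \<Theta> I0 (\<lambda>j. lam * cI I0 j) Vs / real m0 ^ e)"
      unfolding f_def G_def theta_def Vs_def I0_def by simp
    have "continuous_on {0<..} (\<lambda>lam. \<Theta> I0 (\<lambda>j. lam * cI I0 j) Vs / real m0 ^ e)"
      by (rule continuous_on_divide[OF c3 continuous_on_const]) (use m0 in simp)
    thus ?thesis using feq by simp
  qed
  have main: "theta n \<Theta> P0 I lam = f lam * real (card I) ^ e"
    if lam: "lam > 0" and I: "finite I" "I \<noteq> {}" "card I \<ge> d" for lam I
  proof -
    define c where "c = card I"
    have c: "d \<le> c" "1 \<le> c" using I unfolding c_def by (auto simp: card_gt_0_iff Suc_le_eq)
    have t: "theta n \<Theta> P0 I lam = G c lam"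
      unfolding G_def c_def using indep[OF cf P0 I(1) I(2) _ lam] I(3) d_def by simp
    have s1: "G (c * m0) lam = real m0 ^ e * G c lam"
      unfolding G_def e_def d_def using scale[OF cf P0 H _ _ _ lam] c m0 d_def by simp
    have s2: "G (m0 * c) lam = real c ^ e * G m0 lam"
      unfolding G_def e_def d_def using scale[OF cf P0 H _ _ _ lam] c m0 d_def by simp
    have pos: "real m0 ^ e > 0" using m0 by simp
    have "real m0 ^ e * G c lam = real c ^ e * G m0 lam" using s1 s2 by (simp add: mult.commute)
    hence "G c lam = G m0 lam / real m0 ^ e * real c ^ e" using pos by (simp add: field_simps)
    thus ?thesis using t unfolding f_def c_def by simp
  qed
  show ?thesis using cont main unfolding e_def d_def by blast
qed

end
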